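(* For each $a\in[0,1)$, the set $[(a,0)]=\{H_\varphi(a,0):\varphi\in\mathrm{Aut}(\mathbb{D})\}$ is a closed, path-connected subset of $\mathbb{G}$.
   Context: $\mathbb{D}$ is the open unit disc in $\mathbb{C}$ and $\mathrm{Aut}(\mathbb{D})$ its group of holomorphic automorphisms. The symmetrized bidisc is $\mathbb{G}=\{(z_1+z_2,z_1z_2): z_1,z_2\in\mathbb{D}\}\subset\mathbb{C}^2$. For $\varphi\in\mathrm{Aut}(\mathbb{D})$, $H_\varphi:\mathbb{G}\to\mathbb{G}$ is defined by $H_\varphi(z_1+z_2,z_1z_2)=(\varphi(z_1)+\varphi(z_2),\varphi(z_1)\varphi(z_2))$. "Closed" means closed in the relative topology of $\mathbb{G}$. *)

theory Defs
  imports "HOL-Complex_Analysis.Complex_Analysis"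
begin

definition unit_disc :: "complex set" where
  "unit_disc = ball 0 1"

definition AutD :: "(complex \<Rightarrow> complex) set" where
  "AutD = {\<phi>. \<phi> holomorphic_on unit_disc \<and> bij_betw \<phi> unit_disc unit_disc}"

definition symm_bidisc :: "(complex \<times> complex) set" where
  "symm_bidisc = {(z1 + z2, z1 * z2) | z1 z2. z1 \<in> unit_disc \<and> z2 \<in> unit_disc}"

text \<open>H_phi(z1+z2, z1 z2) = (phi z1 + phi z2, phi z1 phi z2); well defined since symmetric.\<close>
definition H :: "(complex \<Rightarrow> complex) \<Rightarrow> complex \<times> complex \<Rightarrow> complex \<times> complex" where
  "H \<phi> p = (SOME q. \<exists>z1 z2. z1 \<in> unit_disc \<and> z2 \<in> unit_disc \<and> p = (z1 + z2, z1 * z2)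
                        \<and> q = (\<phi> z1 + \<phi> z2, \<phi> z1 * \<phi> z2))"

end

theory Submission
  imports Defs
begin

abbreviation Mb :: "complex \<Rightarrow> complex \<Rightarrow> complex" where
  "Mb w z \<equiv> Moebius_function 0 w z"

lemma H_eval:
  assumes "norm (c::complex) < 1"
  shows "H \<phi> (c, 0) = (\<phi> c + \<phi> 0, \<phi> c * \<phi> 0)"
proof -
  let ?P = "\<lambda>q. \<exists>z1 z2. z1 \<in> unit_disc \<and> z2 \<in> unit_disc \<and> (c, 0) = (z1 + z2, z1 * z2)
                        \<and> q = (\<phi> z1 + \<phi> z2, \<phi> z1 * \<phi> z2)"
  have ex: "?P (\<phi> c + \<phi> 0, \<phi> c * \<phi> 0)"
    using assms by (rule_tac x=c in exI, rule_tac x=0 in exI) (auto simp: unit_disc_def)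
  have "?P (SOME q. ?P q)" by (rule someI, rule ex)
  then obtain z1 z2 where "c = z1 + z2" "z1 * z2 = 0"
     "(SOME q. ?P q) = (\<phi> z1 + \<phi> z2, \<phi> z1 * \<phi> z2)" by auto
  moreover have "z1 = 0 \<or> z2 = 0" using \<open>z1 * z2 = 0\<close> by simp
  ultimately have "(SOME q. ?P q) = (\<phi> c + \<phi> 0, \<phi> c * \<phi> 0)"
  proof (elim disjE)
    assume "c = z1 + z2" "z1 = 0" "(SOME q. ?P q) = (\<phi> z1 + \<phi> z2, \<phi> z1 * \<phi> z2)"
    then show ?thesis by (simp add: add.commute mult.commute)
  next
    assume "c = z1 + z2" "z2 = 0" "(SOME q. ?P q) = (\<phi> z1 + \<phi> z2, \<phi> z1 * \<phi> z2)"
    then show ?thesis by simp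
  qed
  then show ?thesis unfolding H_def by simp
qed

lemma Mb_compose:
  assumes "norm w < 1" "norm z < 1"
  shows "Mb w (Mb (-w) z) = z" "Mb (-w) (Mb w z) = z"
  using Moebius_function_compose assms by auto

lemma Mb_in:
  assumes "norm w < 1" "norm z < 1"
  shows "norm (Mb w z) < 1"
  using Moebius_function_norm_lt_1 assms by auto

lemma aut_rho:
  assumes "\<phi> \<in> AutD" "0 \<le> a" "a < 1"
  shows "norm (Mb (\<phi> 0) (\<phi> (of_real a))) = a"
proof -
  have hol: "\<phi> holomorphic_on ball 0 1" and bij: "bij_betw \<phi> (ball 0 1) (ball 0 1)"
    using assms unfolding AutD_def unit_disc_def by simp_all
  have img: "\<phi> ` ball 0 1 = ball 0 1" using bij by (simp add: bij_betw_def)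
  have inj: "inj_on \<phi> (ball 0 1)" using bij by (simp add: bij_betw_def)
  have inb: "norm (\<phi> z) < 1" if "norm z < 1" for z
    using bij_betw_apply[OF bij, of z] that by simp
  define w where "w = \<phi> 0"
  have w1: "norm w < 1" using inb w_def by auto
  have a1: "norm (complex_of_real a) < 1" using assms by auto
  define \<psi> where "\<psi> = Mb w \<circ> \<phi>"
  have hpsi: "\<psi> holomorphic_on ball 0 1"
    unfolding \<psi>_def
    by (rule holomorphic_on_compose_gen[OF hol Moebius_function_holomorphic[OF w1]]) (use img in simp)
  have psi0: "\<psi> 0 = 0" by (simp add: \<psi>_def w_def Moebius_function_eq_zero)
  have psib: "norm (\<psi> z) < 1" if "norm z < 1" for z
    unfolding \<psi>_def comp_def by (rule Mb_in[OF w1 inb[OF that]])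
  have le1: "norm (\<psi> (of_real a)) \<le> norm (complex_of_real a)"
    by (rule Schwarz_Lemma(1)[OF hpsi psi0 psib a1])
  obtain g where hg: "g holomorphic_on (\<phi> ` ball 0 1)" and gi: "\<And>z. z \<in> ball 0 1 \<Longrightarrow> g (\<phi> z) = z"
    using holomorphic_has_inverse[OF hol _ inj] by (metis open_ball mem_ball_0)
  have hg': "g holomorphic_on ball 0 1" using hg img by simp
  have gin: "norm (g z) < 1" if "norm z < 1" for z
  proof -
    have "z \<in> \<phi> ` ball 0 1" using that img by simp
    then obtain y where "y \<in> ball 0 1" "z = \<phi> y" by blast
    then show ?thesis using gi by auto
  qed
  define kk where "kk = g \<circ> Mb (-w)"
  have w1': "norm (-w) < 1" using w1 by simp
  have hchi: "kk holomorphic_on ball 0 1"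
    unfolding kk_def
    by (rule holomorphic_on_compose_gen[OF Moebius_function_holomorphic[OF w1'] hg']) (use w1' Mb_in in force)
  have chib: "norm (kk z) < 1" if "norm z < 1" for z
    unfolding kk_def comp_def by (rule gin[OF Mb_in[OF w1' that]])
  have chi0: "kk 0 = 0"
    using gi[of 0] by (simp add: kk_def Moebius_function_of_zero w_def)
  have "kk (\<psi> (of_real a)) = of_real a"
    using Mb_compose(2)[OF w1 inb[OF a1]] gi[of "of_real a"] a1
    by (simp add: kk_def \<psi>_def)
  moreover have "norm (kk (\<psi> (of_real a))) \<le> norm (\<psi> (of_real a))"
    by (rule Schwarz_Lemma(1)[OF hchi chi0 chib psib[OF a1]])
  ultimately have "norm (complex_of_real a) \<le> norm (\<psi> (of_real a))" by simp
  with le1 have "norm (\<psi> (of_real a)) = a" using assms by simp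
  then show ?thesis by (simp add: \<psi>_def w_def)
qed

lemma aut_mk:
  assumes w1: "norm w < 1" and u1: "norm u = 1"
  shows "(\<lambda>z. Mb (-w) (u * z)) \<in> AutD"
proof -
  have w1': "norm (-w) < 1" using w1 by simp
  have uz: "norm (u * z) < 1" if "norm z < 1" for z using that u1 by (simp add: norm_mult)
  have cu: "cnj u * u = 1"
  proof -
    have "u * cnj u = complex_of_real ((norm u)^2)" by (metis complex_norm_square of_real_power)
    then show ?thesis using u1 by (simp add: mult.commute)
  qed
  have cu': "norm (cnj u) = 1" using u1 by simp
  have hol: "(\<lambda>z. Mb (-w) (u * z)) holomorphic_on ball 0 1"
  proof -
    have "(Mb (-w) \<circ> (\<lambda>z. u * z)) holomorphic_on ball 0 1"
      by (rule holomorphic_on_compose_gen[OF _ Moebius_function_holomorphic[OF w1']])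
         (auto intro!: holomorphic_intros simp: uz)
    then show ?thesis by (simp add: comp_def)
  qed
  have bij: "bij_betw (\<lambda>z. Mb (-w) (u * z)) (ball 0 1) (ball 0 1)"
  proof (rule bij_betw_byWitness[where f'="\<lambda>z. cnj u * Mb w z"])
    show "\<forall>z\<in>ball 0 1. cnj u * Mb w (Mb (- w) (u * z)) = z"
      using Mb_compose(1)[OF w1 uz] cu by (simp add: mult.assoc[symmetric])
    show "\<forall>z\<in>ball 0 1. Mb (- w) (u * (cnj u * Mb w z)) = z"
    proof
      fix z :: complex assume "z \<in> ball 0 1"
      then have "norm z < 1" by simp
      have "u * (cnj u * Mb w z) = (cnj u * u) * Mb w z" by (simp only: ac_simps)
      then have "u * (cnj u * Mb w z) = Mb w z" using cu by simp
      then show "Mb (- w) (u * (cnj u * Mb w z)) = z" by (simp only: Mb_compose(2)[OF w1 \<open>norm z < 1\<close>])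
    qed
    show "(\<lambda>z. Mb (- w) (u * z)) ` ball 0 1 \<subseteq> ball 0 1"
      using Mb_in[OF w1' uz] by auto
    show "(\<lambda>z. cnj u * Mb w z) ` ball 0 1 \<subseteq> ball 0 1"
      using Mb_in[OF w1] cu' by (auto simp: norm_mult)
  qed
  show ?thesis using hol bij by (simp add: AutD_def unit_disc_def)
qed

lemma obtain_u:
  assumes "norm c = a" "0 \<le> a"
  shows "\<exists>u. norm u = 1 \<and> complex_of_real a * u = c"
proof (cases "a = 0")
  case True then show ?thesis using assms by (rule_tac x=1 in exI) simp
next
  case False
  then show ?thesis using assms
    by (rule_tac x="c / complex_of_real a" in exI) (simp add: norm_divide)
qed

lemma alg1: "norm ((z1+z2)^2 - 4*(z1*z2)) = norm (z1 - z2::complex)^2"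
proof -
  have "(z1+z2)^2 - 4*(z1*z2) = (z1 - z2)^2" by (simp add: power2_eq_square algebra_simps)
  then show ?thesis by (simp add: norm_power)
qed

lemma alg2: "norm (1 - cnj z1 * z2)^2 = 1 - (norm (z1+z2)^2 - norm (z1-z2)^2)/2 + norm (z1*z2)^2"
  apply (simp only: cmod_power2)
  apply (simp add: power2_eq_square algebra_simps)
  done

definition gg :: "real \<Rightarrow> complex \<times> complex \<Rightarrow> real" where
  "gg a x = norm ((fst x)^2 - 4 * snd x)
     - a^2 * (1 - (norm (fst x)^2 - norm ((fst x)^2 - 4 * snd x))/2 + norm (snd x)^2)"

lemma rho_iff:
  assumes "norm z1 < 1" "norm z2 < 1" "0 \<le> a"
  shows "norm (Mb z1 z2) = a \<longleftrightarrow> gg a (z1 + z2, z1 * z2) = 0"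
proof -
  define d where "d = norm (1 - cnj z1 * z2)"
  have "norm z1 * norm z2 < 1 * 1" by (rule mult_strict_mono) (use assms in auto)
  then have "norm (cnj z1 * z2) < 1" by (simp add: norm_mult)
  then have "1 - cnj z1 * z2 \<noteq> 0" by auto
  then have dpos: "d > 0" by (simp add: d_def)
  have gv: "gg a (z1 + z2, z1 * z2) = norm (z2 - z1)^2 - a^2 * d^2"
    unfolding gg_def d_def using alg1[of z1 z2] alg2[of z1 z2]
    by (simp add: norm_minus_commute)
  have "norm (Mb z1 z2) = norm (z2 - z1) / d"
    by (simp add: Moebius_function_simple norm_divide d_def)
  then have "norm (Mb z1 z2) = a \<longleftrightarrow> norm (z2 - z1) = a * d"
    using dpos by (auto simp: field_simps)
  also have "\<dots> \<longleftrightarrow> norm (z2 - z1)^2 = (a * d)^2"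
    using dpos assms(3) by (simp add: power2_eq_iff_nonneg)
  also have "\<dots> \<longleftrightarrow> gg a (z1 + z2, z1 * z2) = 0"
    using gv by (simp add: power_mult_distrib)
  finally show ?thesis .
qed

theorem lemma2p2:
  fixes a :: real
  assumes "0 \<le> a" and "a < 1"
  shows "{H \<phi> (complex_of_real a, 0) | \<phi>. \<phi> \<in> AutD} \<subseteq> symm_bidisc
    \<and> closedin (top_of_set symm_bidisc) {H \<phi> (complex_of_real a, 0) | \<phi>. \<phi> \<in> AutD}
    \<and> path_connected {H \<phi> (complex_of_real a, 0) | \<phi>. \<phi> \<in> AutD}"
proof -
  define S where "S = {H \<phi> (complex_of_real a, 0) | \<phi>. \<phi> \<in> AutD}"
  define F where "F = (\<lambda>x::complex\<times>complex. (fst x + Mb (- fst x) (complex_of_real a * snd x),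
                                 fst x * Mb (- fst x) (complex_of_real a * snd x)))"
  define D where "D = ball (0::complex) 1 \<times> sphere (0::complex) 1"
  have a1: "norm (complex_of_real a) < 1" using assms by simp
  have au: "norm (complex_of_real a * u) < 1" if "norm u = 1" for u
    using that assms by (simp add: norm_mult)
  have S1: "S \<subseteq> F ` D"
  proof
    fix x assume "x \<in> S"
    then obtain \<phi> where ph: "\<phi> \<in> AutD" "x = H \<phi> (complex_of_real a, 0)" unfolding S_def by blast
    have bij: "bij_betw \<phi> (ball 0 1) (ball 0 1)" using ph unfolding AutD_def unit_disc_def by simp
    define w where "w = \<phi> 0"
    define v where "v = \<phi> (complex_of_real a)"
    have w1: "norm w < 1" using bij_betw_apply[OF bij, of 0] by (simp add: w_def)
    have v1: "norm v < 1" using bij_betw_apply[OF bij, of "complex_of_real a"] a1 by (simp add: v_def)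
    have "norm (Mb w v) = a" using aut_rho[OF ph(1) assms] by (simp add: w_def v_def)
    then obtain u where u: "norm u = 1" "complex_of_real a * u = Mb w v"
      using obtain_u assms(1) by blast
    have "Mb (-w) (complex_of_real a * u) = v" using u(2) Mb_compose(2)[OF w1 v1] by simp
    then have "F (w, u) = x"
      using ph(2) H_eval[OF a1, of \<phi>] by (simp add: F_def w_def v_def add.commute mult.commute)
    moreover have "(w, u) \<in> D" using w1 u by (simp add: D_def)
    ultimately show "x \<in> F ` D" by blast
  qed
  have S2: "F ` D \<subseteq> S"
  proof
    fix x assume "x \<in> F ` D"
    then obtain w u where wu: "norm w < 1" "norm u = 1" "x = F (w, u)" by (auto simp: D_def)
    define \<phi> where "\<phi> = (\<lambda>z. Mb (-w) (u * z))"
    have ph: "\<phi> \<in> AutD" unfolding \<phi>_def by (rule aut_mk[OF wu(1,2)])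
    have "H \<phi> (complex_of_real a, 0) = x"
      using H_eval[OF a1, of \<phi>] wu(3)
      by (simp add: F_def \<phi>_def Moebius_function_of_zero add.commute mult.commute)
    then show "x \<in> S" using ph unfolding S_def by blast
  qed
  have SF: "S = F ` D" using S1 S2 by blast
  have S3: "S = symm_bidisc \<inter> {x. gg a x = 0}"
  proof
    show "S \<subseteq> symm_bidisc \<inter> {x. gg a x = 0}"
    proof
      fix x assume "x \<in> S"
      then obtain w u where wu: "norm w < 1" "norm u = 1" "x = F (w, u)" using SF by (auto simp: D_def)
      define v where "v = Mb (-w) (complex_of_real a * u)"
      have w1': "norm (-w) < 1" using wu by simp
      have v1: "norm v < 1" unfolding v_def by (rule Mb_in[OF w1' au[OF wu(2)]])
      have xe: "x = (w + v, w * v)" using wu(3) by (simp add: F_def v_def)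
      have "norm (Mb w v) = a"
        using Mb_compose(1)[OF wu(1) au[OF wu(2)]] wu(2) assms(1) by (simp add: v_def norm_mult)
      then have "gg a x = 0" using rho_iff[OF wu(1) v1 assms(1)] xe by simp
      moreover have "x \<in> symm_bidisc" using xe wu(1) v1 unfolding symm_bidisc_def unit_disc_def by auto
      ultimately show "x \<in> symm_bidisc \<inter> {x. gg a x = 0}" by simp
    qed
    show "symm_bidisc \<inter> {x. gg a x = 0} \<subseteq> S"
    proof
      fix x assume x: "x \<in> symm_bidisc \<inter> {x. gg a x = 0}"
      then obtain z1 z2 where z: "norm z1 < 1" "norm z2 < 1" "x = (z1 + z2, z1 * z2)"
        unfolding symm_bidisc_def unit_disc_def by auto
      have "norm (Mb z1 z2) = a" using rho_iff[OF z(1,2) assms(1)] x z(3) by simp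
      then obtain u where u: "norm u = 1" "complex_of_real a * u = Mb z1 z2"
        using obtain_u assms(1) by blast
      have "Mb (-z1) (complex_of_real a * u) = z2" using u(2) Mb_compose(2)[OF z(1,2)] by simp
      then have "F (z1, u) = x" using z(3) by (simp add: F_def)
      moreover have "(z1, u) \<in> D" using z u by (simp add: D_def)
      ultimately show "x \<in> S" using SF by blast
    qed
  qed
  have part1: "S \<subseteq> symm_bidisc" using S3 by blast
  have "closed {x. gg a x = 0}"
    unfolding gg_def by (intro closed_Collect_eq continuous_intros) auto
  then have part2: "closedin (top_of_set symm_bidisc) S"
    using S3 closedin_closed_Int by (metis inf_commute)
  have contF: "continuous_on D F"
  proof -
    have nz: "1 - cnj (- fst x) * (complex_of_real a * snd x) \<noteq> 0" if "x \<in> D" for x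
    proof -
      have f1: "norm (fst x) < 1" and s1: "norm (complex_of_real a * snd x) < 1"
        using that au[of "snd x"] by (auto simp: D_def)
      have "norm (fst x) * norm (complex_of_real a * snd x) < 1 * 1"
        by (rule mult_strict_mono) (use f1 s1 in auto)
      then have "norm (cnj (- fst x) * (complex_of_real a * snd x)) < 1"
        by (simp only: norm_mult complex_mod_cnj norm_minus_cancel mult_1)
      then show ?thesis by (metis norm_one less_irrefl right_minus_eq)
    qed
    show ?thesis unfolding F_def Moebius_function_def
      by (intro continuous_intros) (use nz in auto)
  qed
  have "path_connected D"
    unfolding D_def by (intro path_connected_Times convex_imp_path_connected convex_ball path_connected_sphere) auto
  then have part3: "path_connected S"
    using SF contF path_connected_continuous_image by blast
  show ?thesis using part1 part2 part3 unfolding S_def by blast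
qed

end
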